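(* For any $\mu\in\mathbb F^\times$, the elements $\prod_{i=0}^{d'-1}(A-\mu q^{2i}-\mu^{-1}q^{-2i})$, $\prod_{i=0}^{d'-1}(B-\mu q^{2i}-\mu^{-1}q^{-2i})$ and $\prod_{i=0}^{d'-1}(C-\mu q^{2i}-\mu^{-1}q^{-2i})$ are central in $\triangle_q$.
   Context: $\mathbb F$ is an algebraically closed field and $q\in\mathbb F^\times$ a root of unity of order $d\notin\{1,2,4\}$; $d'=d$ if $d$ odd, $d'=d/2$ if $d$ even. $\triangle_q$ is the unital associative $\mathbb F$-algebra with generators $A,B,C$ subject to the relations that each of $A+\frac{qBC-q^{-1}CB}{q^2-q^{-2}}$, $B+\frac{qCA-q^{-1}AC}{q^2-q^{-2}}$, $C+\frac{qAB-q^{-1}BA}{q^2-q^{-2}}$ is central. *)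

theory Defs
  imports "HOL-Computational_Algebra.Polynomial"
begin

definition alg_closed :: "'f::field itself \<Rightarrow> bool" where
  "alg_closed _ \<longleftrightarrow> (\<forall>p::'f poly. degree p > 0 \<longrightarrow> (\<exists>x. poly p x = 0))"

text \<open>A unital associative F-algebra structure on a ring 'r: a unital ring
  homomorphism from F into the centre of 'r.\<close>
definition alg_emb :: "('f::field \<Rightarrow> 'r::ring_1) \<Rightarrow> bool" where
  "alg_emb emb \<longleftrightarrow> emb 1 = 1 \<and> (\<forall>x y. emb (x + y) = emb x + emb y)
     \<and> (\<forall>x y. emb (x * y) = emb x * emb y) \<and> (\<forall>x r. emb x * r = r * emb x)"

inductive_set gen_alg :: "('f::field \<Rightarrow> 'r::ring_1) \<Rightarrow> 'r \<Rightarrow> 'r \<Rightarrow> 'r \<Rightarrow> 'r set"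
  for emb a b c where
  scal: "emb x \<in> gen_alg emb a b c"
| gen_a: "a \<in> gen_alg emb a b c"
| gen_b: "b \<in> gen_alg emb a b c"
| gen_c: "c \<in> gen_alg emb a b c"
| add: "x \<in> gen_alg emb a b c \<Longrightarrow> y \<in> gen_alg emb a b c \<Longrightarrow> x + y \<in> gen_alg emb a b c"
| mult: "x \<in> gen_alg emb a b c \<Longrightarrow> y \<in> gen_alg emb a b c \<Longrightarrow> x * y \<in> gen_alg emb a b c"

definition central_in :: "'r::ring_1 set \<Rightarrow> 'r \<Rightarrow> bool" where
  "central_in S x \<longleftrightarrow> (\<forall>y\<in>S. x * y = y * x)"

end

theory Submission
  imports Defs
begin


locale embA =
  fixes emb :: "'f::field \<Rightarrow> 'r::ring_1"
  assumes ae: "alg_emb emb"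
begin

lemma emb_add: "emb (x + y) = emb x + emb y" using ae unfolding alg_emb_def by blast
lemma emb_mult: "emb (x * y) = emb x * emb y" using ae unfolding alg_emb_def by blast
lemma emb_1[simp]: "emb 1 = 1" using ae unfolding alg_emb_def by blast
lemma emb_comm: "emb x * r = r * emb x" using ae unfolding alg_emb_def by blast
lemma emb_0[simp]: "emb 0 = 0"
proof -
  have "emb (0 + 0) = emb 0 + emb 0" by (rule emb_add)
  then show ?thesis by (metis add.right_neutral add_left_cancel)
qed
lemma emb_uminus: "emb (- x) = - emb x"
proof -
  have "emb (x + - x) = emb x + emb (-x)" by (rule emb_add)
  then show ?thesis by (metis minus_unique emb_0 add.right_inverse)
qed
lemma emb_diff: "emb (x - y) = emb x - emb y"
  by (metis emb_add emb_uminus diff_conv_add_uminus)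

definition inner :: "'r \<Rightarrow> 'f poly \<Rightarrow> 'r \<Rightarrow> 'r" where
  "inner A a = fold_coeffs (\<lambda>c g X. emb c * X + g X * A) a (\<lambda>X. 0)"

lemma inner_0[simp]: "inner A 0 X = 0" by (simp add: inner_def)

lemma inner_pCons[simp]: "inner A (pCons c a) X = emb c * X + inner A a X * A"
  by (cases "c = 0 \<and> a = 0") (auto simp add: inner_def)

lemma inner_1[simp]: "inner A 1 X = X" by (simp add: one_pCons)

lemma inner_add: "inner A (a + b) X = inner A a X + inner A b X"
  by (induction a b rule: poly_induct2) (simp_all add: emb_add algebra_simps)

lemma inner_Xadd: "inner A a (X + Y) = inner A a X + inner A a Y"
  by (induction a) (simp_all add: algebra_simps)

lemma inner_X0[simp]: "inner A a 0 = 0"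
  by (induction a) simp_all

lemma inner_Xminus: "inner A a (- X) = - inner A a X"
proof -
  have "inner A a (X + - X) = inner A a X + inner A a (-X)" by (rule inner_Xadd)
  then show ?thesis by (metis minus_unique inner_X0 add.right_inverse)
qed

lemma inner_Xdiff: "inner A a (X - Y) = inner A a X - inner A a Y"
  by (metis inner_Xadd inner_Xminus diff_conv_add_uminus)

lemma inner_Xleft: "inner A a (Y * X) = Y * inner A a X" if "\<And>c. Y * emb c = emb c * Y"
proof (induction a)
  case 0 then show ?case by simp
next
  case (pCons c a)
  have "Y * (emb c * X) = emb c * (Y * X)" by (metis mult.assoc that)
  then show ?case using pCons by (simp add: algebra_simps)
qed

lemma inner_Xright: "inner A a (X * A) = inner A a X * A"
  by (induction a) (simp_all add: algebra_simps)

lemma inner_Xemb: "inner A a (emb c * X) = emb c * inner A a X"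
  by (rule inner_Xleft) (simp add: emb_mult[symmetric] mult.commute)

lemma emb_swap: "emb a * (emb c * X) = emb c * (emb a * X)"
  by (metis mult.assoc emb_mult mult.commute)

lemma inner_smult: "inner A (smult c a) X = emb c * inner A a X"
  by (induction a) (simp_all add: algebra_simps emb_mult emb_swap)

lemma inner_mult: "inner A (a * b) X = inner A a (inner A b X)"
proof (induction a arbitrary: X)
  case 0 then show ?case by simp
next
  case (pCons c a)
  show ?case
    by (simp add: inner_add inner_smult pCons inner_Xright)
qed

definition opev :: "'r \<Rightarrow> 'f poly poly \<Rightarrow> 'r \<Rightarrow> 'r" where
  "opev A p = fold_coeffs (\<lambda>a g X. inner A a X + A * g X) p (\<lambda>X. 0)"

lemma opev_0[simp]: "opev A 0 X = 0" by (simp add: opev_def)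

lemma opev_pCons[simp]: "opev A (pCons a p) X = inner A a X + A * opev A p X"
  by (cases "a = 0 \<and> p = 0") (auto simp add: opev_def fun_eq_iff)

lemma opev_1[simp]: "opev A 1 X = X" by (simp add: one_pCons)

lemma opev_add: "opev A (p + q) X = opev A p X + opev A q X"
  by (induction p q rule: poly_induct2) (simp_all add: inner_add algebra_simps)

lemma opev_X0[simp]: "opev A p 0 = 0"
  by (induction p) simp_all

lemma opev_Xadd: "opev A p (X + Y) = opev A p X + opev A p Y"
  by (induction p) (simp_all add: algebra_simps inner_Xadd)

lemma opev_Xminus: "opev A p (- X) = - opev A p X"
proof -
  have "opev A p (X + - X) = opev A p X + opev A p (-X)" by (rule opev_Xadd)
  then show ?thesis by (metis minus_unique opev_X0 add.right_inverse)
qed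

lemma opev_Xdiff: "opev A p (X - Y) = opev A p X - opev A p Y"
  by (metis opev_Xadd opev_Xminus diff_conv_add_uminus)

lemma opev_smult: "opev A (smult a p) X = inner A a (opev A p X)"
proof (induction p arbitrary: X)
  case 0 then show ?case by simp
next
  case (pCons b p)
  have "A * emb c = emb c * A" for c by (simp add: emb_comm)
  then show ?case
    by (simp add: inner_mult pCons inner_Xadd inner_Xleft)
qed

lemma opev_mult: "opev A (p * q) X = opev A p (opev A q X)"
proof (induction p arbitrary: X)
  case 0 then show ?case by simp
next
  case (pCons a p)
  show ?case
    by (simp add: opev_add opev_smult pCons)
qed

lemma opev_diff: "opev A (p - q) X = opev A p X - opev A q X"
  using opev_add[of A "p - q" q X] by (simp add: algebra_simps)

lemma opev_l: "opev A [:0, 1:] X = A * X" by simp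
lemma opev_r: "opev A [:[:0, 1:]:] X = X * A" by simp
lemma opev_c: "opev A [:[:c:]:] X = emb c * X" by simp

end


lemma prod_split:
  fixes f :: "nat \<Rightarrow> 'a::comm_monoid_mult"
  assumes "n \<ge> 1"
  shows "prod f {..<n} = f 0 * (\<Prod>k\<in>{1..(n-1) div 2}. f k * f (n-k))
                         * (if even n then f (n div 2) else 1)"
proof -
  define m where "m = (n-1) div 2"
  have o: "1 \<le> m+1" "m+1 \<le> n-m" "n - m \<le> n" using assms by (auto simp: m_def)
  have a: "prod f {..<n} = prod f {0..<1} * prod f {1..<m+1} * prod f {m+1..<n-m} * prod f {n-m..<n}"
  proof -
    have "prod f {..<n} = prod f {0..<1} * prod f {1..<n}"
      using assms by (simp add: prod.atLeast_Suc_lessThan lessThan_atLeast0)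
    also have "prod f {1..<n} = prod f {1..<m+1} * prod f {m+1..<n}"
      using o by (simp only: prod.atLeastLessThan_concat)
    also have "prod f {m+1..<n} = prod f {m+1..<n-m} * prod f {n-m..<n}"
      using o by (simp only: prod.atLeastLessThan_concat)
    finally show ?thesis by (simp add: mult_ac)
  qed
  have b: "prod f {n-m..<n} = (\<Prod>k\<in>{1..m}. f (n-k))"
    by (rule prod.reindex_bij_witness[where i="\<lambda>k. n-k" and j="\<lambda>i. n-i"]) (use assms in \<open>auto simp: m_def\<close>)
  have c: "prod f {1..<m+1} = prod f {1..m}"
    by (simp add: atLeastLessThanSuc_atLeastAtMost)
  have d: "prod f {m+1..<n-m} = (if even n then f (n div 2) else 1)"
  proof (cases "even n")
    case True
    have "n - m = Suc (m+1)" using assms True unfolding m_def by presburger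
    moreover have "n div 2 = m+1" using assms True unfolding m_def by presburger
    ultimately show ?thesis using True by simp
  next
    case False
    have "n - m = m+1" using assms False unfolding m_def by presburger
    then show ?thesis using False by simp
  qed
  show ?thesis unfolding a b c d m_def[symmetric] by (simp add: prod.distrib mult_ac)
qed

lemma prod_roots_poly:
  fixes w :: "'f::field"
  assumes n: "n > 0" and wn: "w ^ n = 1" and prim: "\<forall>k. 0 < k \<and> k < n \<longrightarrow> w ^ k \<noteq> 1"
  shows "(\<Prod>i<n. z - w ^ i) = z ^ n - 1"
proof -
  have w0: "w \<noteq> 0" using wn n by (auto simp: power_0_left)
  define M :: "'f poly" where "M = monom 1 n + [:-1:]"
  have pM: "poly M x = x ^ n - 1" for x by (simp add: M_def poly_monom)
  have dv: "k \<le> n \<Longrightarrow> (\<Prod>i<k. [:- (w^i), 1:]) dvd M" for k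
  proof (induction k)
    case 0 then show ?case by simp
  next
    case (Suc k)
    then obtain g where g: "M = (\<Prod>i<k. [:- (w^i), 1:]) * g" by auto
    have ne: "w ^ k - w ^ i \<noteq> 0" if "i < k" for i
    proof
      assume "w ^ k - w ^ i = 0"
      then have "w ^ (k - i) * w ^ i = 1 * w ^ i" using that by (simp add: power_add[symmetric])
      then have "w ^ (k - i) = 1" using w0 by simp
      then show False using prim that Suc.prems by auto
    qed
    have "(w ^ k) ^ n = 1" by (metis power_mult mult.commute power_one wn)
    then have "poly M (w ^ k) = 0" by (simp add: pM)
    then have "poly (\<Prod>i<k. [:- (w^i), 1:]) (w^k) * poly g (w^k) = 0" using g by simp
    moreover have "poly (\<Prod>i<k. [:- (w^i), 1:]) (w^k) \<noteq> 0"
      using ne by (simp add: poly_prod)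
    ultimately have "poly g (w^k) = 0" by simp
    then obtain h where h: "g = [:- (w^k), 1:] * h" by (metis poly_eq_0_iff_dvd dvdE)
    have "M = ((\<Prod>i<k. [:- (w^i), 1:]) * [:- (w^k), 1:]) * h" using g h by (simp only: mult.assoc)
    then show ?case by (metis dvd_triv_left prod.lessThan_Suc)
  qed
  define Q where "Q = (\<Prod>i<n. [:- (w^i), 1:])"
  obtain g where g: "M = Q * g" using dv[of n] by (auto simp: Q_def)
  have Q0: "Q \<noteq> 0" by (simp add: Q_def)
  have degQ: "degree Q = n" unfolding Q_def by (subst degree_prod_eq_sum_degree) auto
  have degM: "degree M = n" unfolding M_def using n by (simp add: degree_add_eq_left degree_monom_eq)
  have M0: "M \<noteq> 0" using degM n by auto
  then have g0: "g \<noteq> 0" using g by auto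
  have "degree g = 0" using degM degQ g Q0 g0 by (simp add: degree_mult_eq)
  then obtain c where c: "g = [:c:]" by (metis degree_eq_zeroE)
  have "lead_coeff M = 1" unfolding M_def using n by (simp add: degree_add_eq_left degree_monom_eq coeff_pCons split: nat.splits)
  moreover have "lead_coeff Q = 1" unfolding Q_def by (simp add: lead_coeff_prod)
  moreover have "lead_coeff M = lead_coeff Q * lead_coeff [:c:]" using g c by (simp only: lead_coeff_mult)
  ultimately have "c = 1" by simp
  then have "M = Q" using g c by simp
  then show ?thesis using pM[of z] by (simp add: Q_def poly_prod)
qed

lemma prod_roots_ab:
  fixes w :: "'f::field"
  assumes n: "n > 0" and wn: "w ^ n = 1" and prim: "\<forall>k. 0 < k \<and> k < n \<longrightarrow> w ^ k \<noteq> 1"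
  shows "(\<Prod>i<n. a - b * w ^ i) = a ^ n - b ^ n"
proof (cases "b = 0")
  case True then show ?thesis using n by simp
next
  case False
  have "(\<Prod>i<n. a - b * w ^ i) = (\<Prod>i<n. b * (a / b - w ^ i))"
    using False by (intro prod.cong) (auto simp: field_simps)
  also have "\<dots> = b ^ n * (\<Prod>i<n. a / b - w ^ i)" by (simp add: prod.distrib)
  also have "\<dots> = b ^ n * ((a/b) ^ n - 1)" using prod_roots_poly[OF assms] by simp
  also have "\<dots> = a ^ n - b ^ n" using False by (simp add: field_simps power_divide)
  finally show ?thesis .
qed

lemma prim_inverse:
  fixes w :: "'f::field"
  assumes n: "n > 0" and wn: "w ^ n = 1" and prim: "\<forall>k. 0 < k \<and> k < n \<longrightarrow> w ^ k \<noteq> 1"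
  shows "inverse w ^ n = 1" "\<forall>k. 0 < k \<and> k < n \<longrightarrow> inverse w ^ k \<noteq> 1"
proof -
  show "inverse w ^ n = 1" using wn by (metis power_inverse inverse_1)
  show "\<forall>k. 0 < k \<and> k < n \<longrightarrow> inverse w ^ k \<noteq> 1"
    using prim by (metis power_inverse inverse_1 inverse_inverse_eq)
qed

lemma prod_G:
  fixes w x \<mu> :: "'f::field"
  assumes n: "n > 0" and wn: "w ^ n = 1" and prim: "\<forall>k. 0 < k \<and> k < n \<longrightarrow> w ^ k \<noteq> 1"
    and x: "x \<noteq> 0" and mu: "\<mu> \<noteq> 0"
  shows "(\<Prod>i<n. x + inverse x - (\<mu> * w ^ i + inverse \<mu> * inverse (w ^ i)))
         = x ^ n + inverse x ^ n - \<mu> ^ n - inverse \<mu> ^ n"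
proof -
  have w0: "w \<noteq> 0" using wn n by (auto simp: power_0_left)
  have "(\<Prod>i<n. x + inverse x - (\<mu> * w ^ i + inverse \<mu> * inverse (w ^ i)))
      = (\<Prod>i<n. (x - \<mu> * w ^ i) * (1 - inverse (x * \<mu>) * inverse w ^ i))"
    using x mu w0 by (intro prod.cong) (auto simp: field_simps power_inverse[symmetric])
  also have "\<dots> = (\<Prod>i<n. x - \<mu> * w ^ i) * (\<Prod>i<n. 1 - inverse (x * \<mu>) * inverse w ^ i)"
    by (simp add: prod.distrib)
  also have "\<dots> = (x ^ n - \<mu> ^ n) * (1 ^ n - inverse (x * \<mu>) ^ n)"
    using prod_roots_ab[OF assms(1-3)] prod_roots_ab[OF n prim_inverse[OF assms(1-3)]] by simp
  also have "\<dots> = x ^ n + inverse x ^ n - \<mu> ^ n - inverse \<mu> ^ n"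
    using x mu by (simp add: field_simps power_mult_distrib power_inverse[symmetric])
  finally show ?thesis .
qed

definition PK :: "'f::field \<Rightarrow> nat \<Rightarrow> 'f \<Rightarrow> 'f \<Rightarrow> 'f" where
  "PK w k l r = l^2 + r^2 - (w^k + inverse (w^k)) * l * r + (w^k + inverse (w^k))^2 - 4"

lemma prod_H:
  fixes w y l0 :: "'f::field"
  assumes n: "n \<ge> 3" and wn: "w ^ n = 1" and prim: "\<forall>k. 0 < k \<and> k < n \<longrightarrow> w ^ k \<noteq> 1"
    and y: "y \<noteq> 0"
  shows "(\<Prod>i<n. l0 - (y * w ^ i + inverse y * inverse (w ^ i)))
     = (l0 - (y + inverse y)) * (\<Prod>k\<in>{1..(n-1) div 2}. PK w k l0 (y + inverse y))
       * (if even n then l0 + (y + inverse y) else 1)"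
proof -
  have w0: "w \<noteq> 0" using wn n by (auto simp: power_0_left)
  define f where "f i = l0 - (y * w ^ i + inverse y * inverse (w ^ i))" for i
  have s: "(\<Prod>i<n. f i) = f 0 * (\<Prod>k\<in>{1..(n-1) div 2}. f k * f (n-k))
                         * (if even n then f (n div 2) else 1)"
    by (rule prod_split) (use n in auto)
  have f0: "f 0 = l0 - (y + inverse y)" by (simp add: f_def)
  have fk: "f k * f (n-k) = PK w k l0 (y + inverse y)" if "k \<in> {1..(n-1) div 2}" for k
  proof -
    have "k \<le> n" using that by auto
    then have "w ^ (n-k) * w ^ k = 1" using wn by (simp add: power_add[symmetric])
    then have e: "w ^ (n-k) = inverse (w ^ k)" using w0 by (simp add: field_simps)
    show ?thesis unfolding f_def e PK_def using y w0
      by (simp add: field_simps power2_eq_square)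
  qed
  have fe: "f (n div 2) = l0 + (y + inverse y)" if "even n"
  proof -
    have "(w ^ (n div 2)) ^ 2 = 1" using that wn by (simp add: power_mult[symmetric])
    then have "w ^ (n div 2) = 1 \<or> w ^ (n div 2) = -1" by (simp add: power2_eq_1_iff)
    moreover have "w ^ (n div 2) \<noteq> 1" using prim n by auto
    ultimately have "w ^ (n div 2) = -1" by simp
    then show ?thesis by (simp add: f_def)
  qed
  show ?thesis using s f0 fk fe unfolding f_def[symmetric]
    by (simp add: prod.cong[OF refl fk] cong: if_cong)
qed



lemma alg_closed_infinite:
  assumes "alg_closed TYPE('f::field)"
  shows "infinite (UNIV :: 'f set)"
proof
  assume fin: "finite (UNIV :: 'f set)"
  define Q :: "'f poly" where "Q = (\<Prod>a\<in>UNIV. [:-a, 1:])"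
  have Q0: "Q \<noteq> 0" using fin by (simp add: Q_def)
  have pQ: "poly Q x = 0" for x using fin by (auto simp: Q_def poly_prod)
  show False
  proof (cases "degree (Q + 1) = 0")
    case True
    then obtain c where c: "Q + 1 = [:c:]" by (metis degree_eq_zeroE)
    then have "Q = [:c - 1:]" by (metis add_diff_cancel diff_pCons one_pCons diff_0_right pCons_0_0 diff_zero)
    then have "Q = 0" using pQ[of 0] by simp
    then show False using Q0 by simp
  next
    case False
    then have "\<exists>x. poly (Q + 1) x = 0" using assms unfolding alg_closed_def by blast
    then obtain x where "poly (Q + 1) x = 0" by blast
    then show False using pQ[of x] by simp
  qed
qed

lemma alg_closed_sqrt:
  assumes "alg_closed TYPE('f::field)"
  shows "\<exists>y::'f. y \<noteq> 0 \<and> y + inverse y = t"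
proof -
  have "degree [:1, -t, 1::'f:] > 0" by simp
  then obtain y where y: "poly [:1, -t, 1::'f:] y = 0" using assms unfolding alg_closed_def by blast
  then have y0: "y \<noteq> 0" by auto
  have "y * (y + inverse y - t) = 0" using y y0 by (simp add: field_simps)
  then show ?thesis using y0 by auto
qed

lemma poly_zero_infinite:
  fixes p :: "'f::field poly"
  assumes "infinite (UNIV :: 'f set)" "\<And>x. poly p x = 0"
  shows "p = 0"
proof (rule ccontr)
  assume "p \<noteq> 0"
  then have "finite {x. poly p x = 0}" by (rule poly_roots_finite)
  then show False using assms by simp
qed

lemma ev_eq:
  fixes p :: "'f::field poly poly"
  shows "poly (poly p [:l0:]) r0 = poly (map_poly (\<lambda>c. poly c r0) p) l0"
  by (induction p) (simp_all add: map_poly_pCons)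

lemma biv_zero:
  fixes p :: "'f::field poly poly"
  assumes inf: "infinite (UNIV :: 'f set)" and z: "\<And>l0 r0. poly (poly p [:l0:]) r0 = 0"
  shows "p = 0"
proof -
  have "map_poly (\<lambda>c. poly c r0) p = 0" for r0
    by (rule poly_zero_infinite[OF inf]) (use z ev_eq in metis)
  then have "poly (coeff p i) r0 = 0" for i r0
    by (metis coeff_0 coeff_map_poly poly_0)
  then have "coeff p i = 0" for i by (intro poly_zero_infinite[OF inf])
  then show ?thesis by (simp add: poly_eqI)
qed

definition lv :: "'f::field poly poly" where "lv = [:0, 1:]"
definition rv :: "'f::field poly poly" where "rv = [:[:0, 1:]:]"
definition cst :: "'f::field \<Rightarrow> 'f poly poly" where "cst t = [:[:t:]:]"
definition ev :: "'f::field poly poly \<Rightarrow> 'f \<Rightarrow> 'f \<Rightarrow> 'f" where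
  "ev p l0 r0 = poly (poly p [:l0:]) r0"

lemma ev_simps[simp]:
  "ev (p * q) l0 r0 = ev p l0 r0 * ev q l0 r0"
  "ev (p + q) l0 r0 = ev p l0 r0 + ev q l0 r0"
  "ev (p - q) l0 r0 = ev p l0 r0 - ev q l0 r0"
  "ev (p ^ k) l0 r0 = ev p l0 r0 ^ k"
  "ev 1 l0 r0 = 1"
  "ev (prod f S) l0 r0 = (\<Prod>i\<in>S. ev (f i) l0 r0)"
  "ev lv l0 r0 = l0" "ev rv l0 r0 = r0" "ev (cst t) l0 r0 = t"
  by (simp_all add: ev_def poly_prod lv_def rv_def cst_def)

definition FFp :: "'f::field \<Rightarrow> 'f \<Rightarrow> nat \<Rightarrow> 'f poly poly \<Rightarrow> 'f poly poly" where
  "FFp \<mu> q n p = (\<Prod>i<n. p - cst (\<mu> * q ^ (2*i) + inverse \<mu> * inverse (q ^ (2*i))))"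

definition PKp :: "'f::field \<Rightarrow> nat \<Rightarrow> 'f poly poly" where
  "PKp w k = lv^2 + rv^2 - cst (w^k + inverse (w^k)) * lv * rv + cst ((w^k + inverse (w^k))^2 - 4)"

lemma R_ident:
  fixes q \<mu> :: "'f::field"
  assumes ac: "alg_closed TYPE('f)" and n: "n \<ge> 3" and wn: "(q^2) ^ n = 1"
    and prim: "\<forall>k. 0 < k \<and> k < n \<longrightarrow> (q^2) ^ k \<noteq> 1" and mu: "\<mu> \<noteq> 0"
  shows "FFp \<mu> q n lv - FFp \<mu> q n rv
     = (lv - rv) * (\<Prod>k\<in>{1..(n-1) div 2}. PKp (q^2) k) * (if even n then lv + rv else 1)"
proof -
  have inf: "infinite (UNIV :: 'f set)" by (rule alg_closed_infinite[OF ac])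
  have n0: "n > 0" using n by simp
  have "FFp \<mu> q n lv - FFp \<mu> q n rv
     - (lv - rv) * (\<Prod>k\<in>{1..(n-1) div 2}. PKp (q^2) k) * (if even n then lv + rv else 1) = 0"
  proof (rule biv_zero[OF inf], fold ev_def)
    fix l0 r0 :: 'f
    obtain x where x: "x \<noteq> 0" "x + inverse x = l0" using alg_closed_sqrt[OF ac] by blast
    obtain y where y: "y \<noteq> 0" "y + inverse y = r0" using alg_closed_sqrt[OF ac] by blast
    have th: "\<mu> * q ^ (2*i) + inverse \<mu> * inverse (q ^ (2*i)) = \<mu> * (q^2) ^ i + inverse \<mu> * inverse ((q^2) ^ i)" for i
      by (simp add: power_mult)
    have e1: "ev (FFp \<mu> q n lv) l0 r0 = x ^ n + inverse x ^ n - \<mu> ^ n - inverse \<mu> ^ n"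
      unfolding FFp_def th using prod_G[OF n0 wn prim x(1) mu] x(2) by simp
    have e2: "ev (FFp \<mu> q n rv) l0 r0 = y ^ n + inverse y ^ n - \<mu> ^ n - inverse \<mu> ^ n"
      unfolding FFp_def th using prod_G[OF n0 wn prim y(1) mu] y(2) by simp
    have e3: "(\<Prod>i<n. l0 - (y * (q^2) ^ i + inverse y * inverse ((q^2) ^ i))) = x ^ n + inverse x ^ n - y ^ n - inverse y ^ n"
      using prod_G[OF n0 wn prim x(1) y(1)] x(2) by simp
    have e4: "ev (PKp (q^2) k) l0 r0 = PK (q^2) k l0 r0" for k
      by (simp add: PKp_def PK_def)
    have e5: "ev ((lv - rv) * (\<Prod>k\<in>{1..(n-1) div 2}. PKp (q^2) k) * (if even n then lv + rv else 1)) l0 r0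
      = (l0 - r0) * (\<Prod>k\<in>{1..(n-1) div 2}. PK (q^2) k l0 r0) * (if even n then l0 + r0 else 1)"
      by (simp add: e4)
    show "ev (FFp \<mu> q n lv - FFp \<mu> q n rv
     - (lv - rv) * (\<Prod>k\<in>{1..(n-1) div 2}. PKp (q^2) k) * (if even n then lv + rv else 1)) l0 r0 = 0"
    proof -
      have HH: "(l0 - r0) * (\<Prod>k\<in>{1..(n-1) div 2}. PK (q^2) k l0 r0) * (if even n then l0 + r0 else 1)
         = x ^ n + inverse x ^ n - y ^ n - inverse y ^ n"
        using prod_H[OF n wn prim y(1), of l0] e3 y(2) by simp
      show ?thesis by (simp only: ev_simps(3) e1 e2 e5 HH) (simp add: algebra_simps)
    qed
  qed
  then show ?thesis by simp
qed



context embA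
begin

lemma opev_lv[simp]: "opev A lv X = A * X" by (simp add: lv_def)
lemma opev_rv[simp]: "opev A rv X = X * A" by (simp add: rv_def)
lemma opev_cst[simp]: "opev A (cst t) X = emb t * X" by (simp add: cst_def)

lemma emb_mult_comm: "emb a * emb b = emb b * emb a"
  by (metis emb_mult mult.commute)

lemma lin_comm: "(A - emb c) * (A - emb a) = (A - emb a) * (A - emb c)"
  by (simp add: algebra_simps emb_comm[where x=c and r=A] emb_comm[where x=a and r=A] emb_mult_comm[of c a])

lemma prod_list_comm:
  "(A - emb c) * prod_list (map (\<lambda>i. A - emb (f i)) xs) = prod_list (map (\<lambda>i. A - emb (f i)) xs) * (A - emb c)"
proof (induction xs)
  case Nil then show ?case by simp
next
  case (Cons a xs)
  have "(A - emb c) * prod_list (map (\<lambda>i. A - emb (f i)) (a # xs))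
      = ((A - emb c) * (A - emb (f a))) * prod_list (map (\<lambda>i. A - emb (f i)) xs)"
    by (simp add: mult.assoc)
  also have "\<dots> = (A - emb (f a)) * ((A - emb c) * prod_list (map (\<lambda>i. A - emb (f i)) xs))"
    by (simp only: mult.assoc[symmetric] lin_comm[of A c "f a"])
  also have "\<dots> = prod_list (map (\<lambda>i. A - emb (f i)) (a # xs)) * (A - emb c)"
    by (simp add: Cons mult.assoc)
  finally show ?case .
qed

lemma opev_prod_l:
  "opev A (\<Prod>i<k. lv - cst (f i)) X = prod_list (map (\<lambda>i. A - emb (f i)) [0..<k]) * X"
proof (induction k arbitrary: X)
  case 0 then show ?case by simp
next
  case (Suc k)
  have "opev A (\<Prod>i<Suc k. lv - cst (f i)) X = opev A (\<Prod>i<k. lv - cst (f i)) (opev A (lv - cst (f k)) X)"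
    by (simp only: prod.lessThan_Suc opev_mult)
  also have "\<dots> = prod_list (map (\<lambda>i. A - emb (f i)) [0..<k]) * (A * X - emb (f k) * X)"
    by (simp only: Suc opev_diff opev_lv opev_cst)
  also have "\<dots> = prod_list (map (\<lambda>i. A - emb (f i)) [0..<Suc k]) * X"
    by (simp add: algebra_simps)
  finally show ?case .
qed

lemma opev_prod_r:
  "opev A (\<Prod>i<k. rv - cst (f i)) X = X * prod_list (map (\<lambda>i. A - emb (f i)) [0..<k])"
proof (induction k arbitrary: X)
  case 0 then show ?case by simp
next
  case (Suc k)
  have "opev A (\<Prod>i<Suc k. rv - cst (f i)) X
     = (X * A - emb (f k) * X) * prod_list (map (\<lambda>i. A - emb (f i)) [0..<k])"
    by (simp only: prod.lessThan_Suc opev_mult Suc opev_diff opev_rv opev_cst)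
  also have "\<dots> = X * ((A - emb (f k)) * prod_list (map (\<lambda>i. A - emb (f i)) [0..<k]))"
    by (simp add: algebra_simps emb_comm[where x="f k" and r=X])
  also have "\<dots> = X * prod_list (map (\<lambda>i. A - emb (f i)) [0..<Suc k])"
    by (simp add: prod_list_comm mult.assoc)
  finally show ?case .
qed

lemma key:
  fixes q \<mu> :: 'f and A X :: 'r
  assumes ac: "alg_closed TYPE('f)" and n: "n \<ge> 3" and wn: "(q^2) ^ n = 1"
    and prim: "\<forall>k. 0 < k \<and> k < n \<longrightarrow> (q^2) ^ k \<noteq> 1" and mu: "\<mu> \<noteq> 0"
    and hZ: "A * (A*A*X + X*A*A - emb (q^2 + inverse (q^2)) * A*X*A + emb ((q^2 + inverse (q^2))^2 - 4) * X)
           = (A*A*X + X*A*A - emb (q^2 + inverse (q^2)) * A*X*A + emb ((q^2 + inverse (q^2))^2 - 4) * X) * A"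
  shows "prod_list (map (\<lambda>i. A - emb (\<mu> * q ^ (2*i) + inverse \<mu> * inverse (q ^ (2*i)))) [0..<n]) * X
       = X * prod_list (map (\<lambda>i. A - emb (\<mu> * q ^ (2*i) + inverse \<mu> * inverse (q ^ (2*i)))) [0..<n])"
proof -
  define w where "w = q^2"
  define m where "m = (n-1) div 2"
  define S where "S = (\<Prod>k\<in>{2..m}. PKp w k) * (if even n then lv + rv else 1)"
  have m1: "1 \<le> m" using n by (simp add: m_def)
  have "{1..m} = insert 1 {2..m}" using m1 by auto
  then have "(\<Prod>k\<in>{1..m}. PKp w k) = PKp w 1 * (\<Prod>k\<in>{2..m}. PKp w k)" by simp
  then have id: "FFp \<mu> q n lv - FFp \<mu> q n rv = S * ((lv - rv) * PKp w 1)"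
    using R_ident[OF ac n wn prim mu] unfolding w_def[symmetric] m_def[symmetric] S_def
    by (simp add: mult_ac)
  have z: "opev A (PKp w 1) X = A*A*X + X*A*A - emb (q^2 + inverse (q^2)) * A*X*A + emb ((q^2 + inverse (q^2))^2 - 4) * X"
    by (simp add: PKp_def w_def power2_eq_square opev_add opev_diff opev_mult mult.assoc)
  have "opev A (FFp \<mu> q n lv - FFp \<mu> q n rv) X = 0"
    unfolding id opev_mult opev_diff z using hZ by simp
  then show ?thesis
    by (simp add: opev_diff FFp_def opev_prod_l opev_prod_r)
qed

end


context embA
begin

definition sm :: "'r \<Rightarrow> 'f \<Rightarrow> 'r" where "sm X c = emb c * X"

lemma sm_rules:
  "emb c * X = sm X c"
  "sm X c * Y = sm (X * Y) c"
  "X * sm Y c = sm (X * Y) c"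
  "sm (sm X c) d = sm X (d * c)"
  "sm (X + Y) c = sm X c + sm Y c"
  "sm (X - Y) c = sm X c - sm Y c"
  "sm (- X) c = sm X (- c)"
  "- sm X c = sm X (- c)"
  "sm X c + sm X d = sm X (c + d)"
  "sm X c + (sm X d + Z) = sm X (c + d) + Z"
  "sm X 0 = 0"
  unfolding sm_def
  by (simp_all add: algebra_simps emb_add emb_mult emb_uminus)
     (metis mult.assoc emb_comm)+

lemma sm_1: "sm X 1 = X" by (simp add: sm_def)

lemma ZB_gen:
  fixes u v e k :: 'f and A B C :: 'r
  assumes uv: "u * v = 1" and ek: "e * k = 1"
  shows "A*A*B + B*A*A - emb (u*u + v*v) * A*B*A + emb (e*e) * B
    = emb (e*e) * (B + emb k * (emb u * C * A - emb v * A * C))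
      - emb e * (emb u * (C + emb k * (emb u * A * B - emb v * B * A)) * A
            - emb v * A * (C + emb k * (emb u * A * B - emb v * B * A)))"
proof -
  have uv2: "u * (v * z) = z" "e * (k * z) = z" for z
    using uv ek by (metis mult.assoc mult_1)+
  show ?thesis
    by (simp only: sm_rules sm_1 algebra_simps uv uv2 ek mult_1_left mult_1_right)
qed

end

lemma nt_facts:
  fixes q :: "'f::field"
  assumes q: "q \<noteq> 0" and d0: "d > 0" and qd: "q ^ d = 1"
    and prim: "\<forall>k. 0 < k \<and> k < d \<longrightarrow> q ^ k \<noteq> 1" and d124: "d \<notin> {1, 2, 4}"
    and n: "n = (if odd d then d else d div 2)"
  shows "n \<ge> 3" "(q^2) ^ n = 1" "\<forall>k. 0 < k \<and> k < n \<longrightarrow> (q^2) ^ k \<noteq> 1"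
    "q^2 - inverse (q^2) \<noteq> 0"
proof -
  have d3: "d \<ge> 3" using d0 d124 by auto
  show "n \<ge> 3"
  proof (cases "odd d")
    case True then show ?thesis using n d3 by simp
  next
    case False
    have "d \<noteq> 4" using d124 by auto
    then have "d \<ge> 6" using False d3 by presburger
    then show ?thesis using n False by simp
  qed
  show "(q^2) ^ n = 1"
  proof (cases "odd d")
    case True
    have "(q^2) ^ d = (q ^ d) ^ 2" by (metis power_mult mult.commute)
    then show ?thesis using n True qd by simp
  next
    case False
    then have "2 * (d div 2) = d" by simp
    then have "(q^2) ^ (d div 2) = q ^ d" by (metis power_mult)
    then show ?thesis using n False qd by simp
  qed
  show "\<forall>k. 0 < k \<and> k < n \<longrightarrow> (q^2) ^ k \<noteq> 1"
  proof (intro allI impI)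
    fix k assume k: "0 < k \<and> k < n"
    show "(q^2) ^ k \<noteq> 1"
    proof
      assume h: "(q^2) ^ k = 1"
      then have h2: "q ^ (2*k) = 1" by (simp add: power_mult)
      show False
      proof (cases "2 * k < d")
        case True then show False using prim k h2 by auto
      next
        case False
        then have od: "odd d" and kd: "k < d" using k n by (auto split: if_splits)
        then have "2 * k \<noteq> d" by auto
        then have lt: "d < 2 * k" using False by simp
        have "q ^ (2*k) = q ^ (2*k - d) * q ^ d" using lt by (simp add: power_add[symmetric])
        then have "q ^ (2*k - d) = 1" using h2 qd by simp
        moreover have "0 < 2*k - d" "2*k - d < d" using lt kd by auto
        ultimately show False using prim by auto
      qed
    qed
  qed
  show "q^2 - inverse (q^2) \<noteq> 0"
  proof
    assume "q^2 - inverse (q^2) = 0"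
    then have "q^2 * q^2 = 1" using q by (simp add: field_simps)
    then have q4: "q ^ 4 = 1" by (simp add: power_add[symmetric])
    show False
    proof (cases "d = 3")
      case True
      then have "q ^ 4 = q ^ 3 * q" by (simp add: power_Suc2[symmetric])
      then have "q = 1" using q4 qd True by simp
      then show False using prim True by (metis power_one_right zero_less_one one_less_numeral_iff semiring_norm(77))
    next
      case False
      then have "4 < d" using d3 d124 by auto
      then show False using prim q4 by auto
    qed
  qed
qed

lemma gen_alg_rot:
  "x \<in> gen_alg emb A B C \<Longrightarrow> x \<in> gen_alg emb B C A"
  by (induction rule: gen_alg.induct) (auto intro: gen_alg.intros)

lemma gen_alg_rot_eq: "gen_alg emb B C A = gen_alg emb A B C"
  using gen_alg_rot by blast

context embA
begin

lemma comm_lemma: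
  fixes G1 G2 A :: 'r
  assumes "A * G1 = G1 * A" "A * G2 = G2 * A"
  shows "A * (emb a * G1 - emb b * (emb u * G2 * A - emb v * A * G2))
       = (emb a * G1 - emb b * (emb u * G2 * A - emb v * A * G2)) * A"
proof -
  have g1: "A * (G1 * Z) = G1 * (A * Z)" "A * (G2 * Z) = G2 * (A * Z)" for Z
    using assms by (metis mult.assoc)+
  show ?thesis by (simp only: sm_rules algebra_simps assms g1)
qed

lemma ZC_gen:
  fixes u v e k :: 'f and A B C :: 'r
  assumes uv: "u * v = 1" and ek: "e * k = 1"
  shows "A*A*C + C*A*A - emb (u*u + v*v) * A*C*A + emb (e*e) * C
    = emb (e*e) * (C + emb k * (emb u * A * B - emb v * B * A))
      - emb e * (emb u * A * (B + emb k * (emb u * C * A - emb v * A * C))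
            - emb v * (B + emb k * (emb u * C * A - emb v * A * C)) * A)"
proof -
  have uv2: "u * (v * z) = z" "e * (k * z) = z" for z
    using uv ek by (metis mult.assoc mult_1)+
  show ?thesis
    by (simp only: sm_rules sm_1 algebra_simps uv uv2 ek mult_1_left mult_1_right)
qed

lemma central_A:
  fixes q \<mu> :: 'f and A B C :: 'r
  assumes ac: "alg_closed TYPE('f)" and q: "q \<noteq> 0" and eps: "q^2 - inverse (q^2) \<noteq> 0"
    and n: "n \<ge> 3" and wn: "(q^2) ^ n = 1"
    and prim: "\<forall>k. 0 < k \<and> k < n \<longrightarrow> (q^2) ^ k \<noteq> 1" and mu: "\<mu> \<noteq> 0"
    and hb: "central_in (gen_alg emb A B C)
           (B + emb (inverse (q^2 - inverse (q^2))) * (emb q * C * A - emb (inverse q) * A * C))"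
    and hc: "central_in (gen_alg emb A B C)
           (C + emb (inverse (q^2 - inverse (q^2))) * (emb q * A * B - emb (inverse q) * B * A))"
  shows "central_in (gen_alg emb A B C)
             (prod_list (map (\<lambda>i. A - emb (\<mu> * q ^ (2*i) + inverse \<mu> * inverse (q ^ (2*i)))) [0..<n]))"
proof -
  define P where "P = prod_list (map (\<lambda>i. A - emb (\<mu> * q ^ (2*i) + inverse \<mu> * inverse (q ^ (2*i)))) [0..<n])"
  define \<beta> where "\<beta> = B + emb (inverse (q^2 - inverse (q^2))) * (emb q * C * A - emb (inverse q) * A * C)"
  define \<gamma> where "\<gamma> = C + emb (inverse (q^2 - inverse (q^2))) * (emb q * A * B - emb (inverse q) * B * A)"
  define e where "e = q^2 - inverse (q^2)"
  have Ain: "A \<in> gen_alg emb A B C" by (rule gen_alg.gen_a)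
  have bA: "A * \<beta> = \<beta> * A" using hb Ain unfolding central_in_def \<beta>_def by metis
  have cA: "A * \<gamma> = \<gamma> * A" using hc Ain unfolding central_in_def \<gamma>_def by metis
  have uv: "q * inverse q = 1" using q by simp
  have ek: "e * inverse e = 1" using eps by (simp add: e_def)
  have c1: "q^2 + inverse (q^2) = q * q + inverse q * inverse q"
    by (simp add: power2_eq_square power_inverse)
  have c2: "(q^2 + inverse (q^2))^2 - 4 = e * e"
    using q by (simp add: e_def power2_eq_square field_simps)
  have ek': "(q^2 - inverse (q^2)) * inverse (q^2 - inverse (q^2)) = 1" using eps by simp
  have zb: "A*A*B + B*A*A - emb (q^2 + inverse (q^2)) * A*B*A + emb ((q^2 + inverse (q^2))^2 - 4) * B
      = emb (e*e) * \<beta> - emb e * (emb q * \<gamma> * A - emb (inverse q) * A * \<gamma>)"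
    unfolding c2 unfolding c1 \<beta>_def \<gamma>_def e_def by (rule ZB_gen[OF uv ek'])
  have zc: "A*A*C + C*A*A - emb (q^2 + inverse (q^2)) * A*C*A + emb ((q^2 + inverse (q^2))^2 - 4) * C
      = emb (e*e) * \<gamma> - emb e * (emb q * A * \<beta> - emb (inverse q) * \<beta> * A)"
    unfolding c2 unfolding c1 \<beta>_def \<gamma>_def e_def by (rule ZC_gen[OF uv ek'])
  have ZB: "A * (A*A*B + B*A*A - emb (q^2 + inverse (q^2)) * A*B*A + emb ((q^2 + inverse (q^2))^2 - 4) * B)
           = (A*A*B + B*A*A - emb (q^2 + inverse (q^2)) * A*B*A + emb ((q^2 + inverse (q^2))^2 - 4) * B) * A"
    unfolding zb by (rule comm_lemma[OF bA cA])
  have ZC: "A * (A*A*C + C*A*A - emb (q^2 + inverse (q^2)) * A*C*A + emb ((q^2 + inverse (q^2))^2 - 4) * C)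
           = (A*A*C + C*A*A - emb (q^2 + inverse (q^2)) * A*C*A + emb ((q^2 + inverse (q^2))^2 - 4) * C) * A"
  proof -
    have g1: "A * (\<beta> * Z) = \<beta> * (A * Z)" "A * (\<gamma> * Z) = \<gamma> * (A * Z)" for Z
      using bA cA by (metis mult.assoc)+
    show ?thesis unfolding zc by (simp only: sm_rules algebra_simps bA cA g1)
  qed
  have PB: "P * B = B * P" unfolding P_def by (rule key[OF ac n wn prim mu ZB])
  have PC: "P * C = C * P" unfolding P_def by (rule key[OF ac n wn prim mu ZC])
  have PA: "P * A = A * P"
    using prod_list_comm[of A 0 "\<lambda>i. \<mu> * q ^ (2*i) + inverse \<mu> * inverse (q ^ (2*i))" "[0..<n]"]
    unfolding P_def by simp
  have "P * y = y * P" if "y \<in> gen_alg emb A B C" for y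
    using that
  proof (induction rule: gen_alg.induct)
    case (scal x) then show ?case by (simp add: emb_comm)
  next
    case gen_a then show ?case by (rule PA)
  next
    case gen_b then show ?case by (rule PB)
  next
    case gen_c then show ?case by (rule PC)
  next
    case (add x y) then show ?case by (simp add: algebra_simps)
  next
    case (mult x y)
    have "P * (x * y) = (P * x) * y" by (simp add: mult.assoc)
    also have "\<dots> = x * (P * y)" using mult by (simp add: mult.assoc)
    also have "\<dots> = (x * y) * P" using mult by (simp add: mult.assoc)
    finally show ?case .
  qed
  then show ?thesis unfolding central_in_def P_def[symmetric] by blast
qed

end

theorem lemma6p5:
  fixes q \<mu> :: "'f::field" and d :: nat
    and emb :: "'f \<Rightarrow> 'r::ring_1" and A B C :: 'r
  assumes "alg_closed TYPE('f)"
    and "q \<noteq> 0" and "d > 0" and "q ^ d = 1" and "\<forall>k. 0 < k \<and> k < d \<longrightarrow> q ^ k \<noteq> 1"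
    and "d \<notin> {1, 2, 4}"
    and "alg_emb emb"
    and "central_in (gen_alg emb A B C)
           (A + emb (inverse (q^2 - inverse (q^2))) * (emb q * B * C - emb (inverse q) * C * B))"
    and "central_in (gen_alg emb A B C)
           (B + emb (inverse (q^2 - inverse (q^2))) * (emb q * C * A - emb (inverse q) * A * C))"
    and "central_in (gen_alg emb A B C)
           (C + emb (inverse (q^2 - inverse (q^2))) * (emb q * A * B - emb (inverse q) * B * A))"
    and "\<mu> \<noteq> 0"
  shows "let d' = (if odd d then d else d div 2) in
           central_in (gen_alg emb A B C)
             (prod_list (map (\<lambda>i. A - emb (\<mu> * q ^ (2*i) + inverse \<mu> * inverse (q ^ (2*i)))) [0..<d']))
         \<and> central_in (gen_alg emb A B C)
             (prod_list (map (\<lambda>i. B - emb (\<mu> * q ^ (2*i) + inverse \<mu> * inverse (q ^ (2*i)))) [0..<d']))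
         \<and> central_in (gen_alg emb A B C)
             (prod_list (map (\<lambda>i. C - emb (\<mu> * q ^ (2*i) + inverse \<mu> * inverse (q ^ (2*i)))) [0..<d']))"
proof -
  interpret embA emb by (unfold_locales) (rule assms(7))
  define n where "n = (if odd d then d else d div 2)"
  note nt = nt_facts[OF assms(2,3,4,5,6) n_def]
  have gB: "gen_alg emb B C A = gen_alg emb A B C" by (rule gen_alg_rot_eq)
  have gC: "gen_alg emb C A B = gen_alg emb A B C" by (metis gen_alg_rot_eq)
  have cA: "central_in (gen_alg emb A B C)
             (prod_list (map (\<lambda>i. A - emb (\<mu> * q ^ (2*i) + inverse \<mu> * inverse (q ^ (2*i)))) [0..<n]))"
    by (rule central_A[OF assms(1,2) nt(4) nt(1) nt(2) nt(3) assms(11) assms(9) assms(10)])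
  have cB: "central_in (gen_alg emb B C A)
             (prod_list (map (\<lambda>i. B - emb (\<mu> * q ^ (2*i) + inverse \<mu> * inverse (q ^ (2*i)))) [0..<n]))"
    by (rule central_A[OF assms(1,2) nt(4) nt(1) nt(2) nt(3) assms(11)]) (simp_all only: gB assms(10) assms(8))
  have cC: "central_in (gen_alg emb C A B)
             (prod_list (map (\<lambda>i. C - emb (\<mu> * q ^ (2*i) + inverse \<mu> * inverse (q ^ (2*i)))) [0..<n]))"
    by (rule central_A[OF assms(1,2) nt(4) nt(1) nt(2) nt(3) assms(11)]) (simp_all only: gC assms(8) assms(9))
  show ?thesis unfolding Let_def n_def[symmetric] using cA cB cC gB gC by simp
qed

end
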